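(* Let $V$ be a finite-dimensional vector space, $\pi\in\wedge^2V$, and $V_1,V_2\subset V$ subspaces with $\pi(V_1^0,V_2^0)=0$. For $j=1,2$ let $\rho_j:V\to V/V_j$ be the projections. Assume $U\subset V$ is a subspace that is coisotropic with respect to $\pi$ and such that $\rho_1|_U:U\to V/V_1$ is an isomorphism, and let $\psi=\rho_2\circ(\rho_1|_U)^{-1}:V/V_1\to V/V_2$. Then $\psi(\rho_1(\pi))=-\rho_2(\pi)$ in $\wedge^2(V/V_2)$.
   Context: For a subspace $U_1\subset V$, $U_1^0=\{\xi\in V^*:\xi|_{U_1}=0\}$. $\pi(\xi,\eta)$ denotes the pairing of $\pi\in\wedge^2V$ with $\xi,\eta\in V^*$. For subspaces $U_1,U_2\subset V$, $U_1\wedge U_2=\wedge^2V\cap(U_1\otimes U_2+U_2\otimes U_1)$, and $U_1$ is coisotropic with respect to $\pi$ if $\pi\in U_1\wedge V$. Linear maps act on $\wedge^2$ in the induced way. *)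

theory Defs
  imports Main HOL.Modules "HOL-Library.Function_Algebras"
begin

text \<open>Coordinates: V = k^n realised as functions 'n => 'k with 'n finite.
 Elements of V*, also 'n => 'k, paired with V by the standard pairing.
 Tensors in V (x) V are functions 'n => 'n => 'k (coefficients w.r.t. e_i (x) e_j).\<close>

definition vsc :: "'k::field \<Rightarrow> ('n \<Rightarrow> 'k) \<Rightarrow> ('n \<Rightarrow> 'k)" where
  "vsc c v = (\<lambda>i. c * v i)"

definition tsc :: "'k::field \<Rightarrow> ('n \<Rightarrow> 'n \<Rightarrow> 'k) \<Rightarrow> ('n \<Rightarrow> 'n \<Rightarrow> 'k)" where
  "tsc c t = (\<lambda>i j. c * t i j)"

definition is_subspace :: "('n::finite \<Rightarrow> 'k::field) set \<Rightarrow> bool" where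
  "is_subspace S = module.subspace vsc S"

definition pair :: "('n::finite \<Rightarrow> 'k::field) \<Rightarrow> ('n \<Rightarrow> 'k) \<Rightarrow> 'k" where
  "pair \<xi> v = (\<Sum>i\<in>UNIV. \<xi> i * v i)"

definition annih :: "('n::finite \<Rightarrow> 'k::field) set \<Rightarrow> ('n \<Rightarrow> 'k) set" where
  "annih U = {\<xi>. \<forall>u\<in>U. pair \<xi> u = 0}"

definition bpair :: "('n::finite \<Rightarrow> 'n \<Rightarrow> 'k::field) \<Rightarrow> ('n \<Rightarrow> 'k) \<Rightarrow> ('n \<Rightarrow> 'k) \<Rightarrow> 'k" where
  "bpair p \<xi> \<eta> = (\<Sum>i\<in>UNIV. \<Sum>j\<in>UNIV. p i j * \<xi> i * \<eta> j)"

text \<open>wedge^2 V inside V (x) V: alternating tensors\<close>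
definition wedge2 :: "('n::finite \<Rightarrow> 'n \<Rightarrow> 'k::field) set" where
  "wedge2 = {p. \<forall>i j. p i j = - p j i \<and> p i i = 0}"

definition tens :: "('n \<Rightarrow> 'k::field) \<Rightarrow> ('n \<Rightarrow> 'k) \<Rightarrow> ('n \<Rightarrow> 'n \<Rightarrow> 'k)" where
  "tens u v = (\<lambda>i j. u i * v j)"

text \<open>U1 /\ U2 = wedge^2 V \<inter> (U1 (x) U2 + U2 (x) U1)\<close>
definition wedge_sub :: "('n::finite \<Rightarrow> 'k::field) set \<Rightarrow> ('n \<Rightarrow> 'k) set \<Rightarrow> ('n \<Rightarrow> 'n \<Rightarrow> 'k) set" where
  "wedge_sub U1 U2 = wedge2 \<inter>
     module.span tsc ({tens u v | u v. u \<in> U1 \<and> v \<in> U2} \<union> {tens v u | u v. u \<in> U1 \<and> v \<in> U2})"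

definition coisotropic :: "('n::finite \<Rightarrow> 'k::field) set \<Rightarrow> ('n \<Rightarrow> 'n \<Rightarrow> 'k) \<Rightarrow> bool" where
  "coisotropic U p \<longleftrightarrow> p \<in> wedge_sub U UNIV"

text \<open>Linear maps between coordinate spaces as matrices\<close>
definition app :: "('m \<Rightarrow> 'n::finite \<Rightarrow> 'k::field) \<Rightarrow> ('n \<Rightarrow> 'k) \<Rightarrow> ('m \<Rightarrow> 'k)" where
  "app A v = (\<lambda>i. \<Sum>j\<in>UNIV. A i j * v j)"

text \<open>induced action on 2-tensors (A (x) A)\<close>
definition app2 :: "('m \<Rightarrow> 'n::finite \<Rightarrow> 'k::field) \<Rightarrow> ('n \<Rightarrow> 'n \<Rightarrow> 'k) \<Rightarrow> ('m \<Rightarrow> 'm \<Rightarrow> 'k)" where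
  "app2 A p = (\<lambda>i j. \<Sum>a\<in>UNIV. \<Sum>b\<in>UNIV. A i a * A j b * p a b)"

text \<open>R represents the quotient projection V -> V/W: surjective with kernel W\<close>
definition is_quotient_map :: "('m \<Rightarrow> 'n::finite \<Rightarrow> 'k::field) \<Rightarrow> ('n \<Rightarrow> 'k) set \<Rightarrow> bool" where
  "is_quotient_map R W \<longleftrightarrow> surj (app R) \<and> {v. app R v = 0} = W"

end

theory Submission
  imports Defs
begin

lemma module_vsc: "module (vsc :: 'k::field \<Rightarrow> ('n \<Rightarrow> 'k) \<Rightarrow> _)"
  unfolding module_def vsc_def by (auto simp: algebra_simps fun_eq_iff)

lemma module_tsc: "module (tsc :: 'k::field \<Rightarrow> ('n \<Rightarrow> 'n \<Rightarrow> 'k) \<Rightarrow> _)"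
  unfolding module_def tsc_def by (auto simp: algebra_simps fun_eq_iff)

lemma bpair_minus1: "bpair p (\<lambda>i. x i - y i) z = bpair p x z - bpair p y z"
  unfolding bpair_def by (simp add: algebra_simps sum_subtractf)

lemma bpair_minus2: "bpair p z (\<lambda>i. x i - y i) = bpair p z x - bpair p z y"
  unfolding bpair_def by (simp add: algebra_simps sum_subtractf)

lemma bpair_antisym: assumes "p \<in> wedge2" shows "bpair p x y = - bpair p y x"
proof -
  have "bpair p x y = (\<Sum>j\<in>UNIV. \<Sum>i\<in>UNIV. p i j * x i * y j)"
    unfolding bpair_def by (rule sum.swap)
  also have "\<dots> = (\<Sum>j\<in>UNIV. \<Sum>i\<in>UNIV. - (p j i * y j * x i))"
  proof (intro sum.cong refl)
    fix i j
    have pij: "p i j = - p j i" using assms unfolding wedge2_def by blast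
    show "p i j * x i * y j = - (p j i * y j * x i)" by (subst pij) (simp add: mult_ac)
  qed
  finally show ?thesis unfolding bpair_def by (simp add: sum_negf)
qed

lemma sum_fun_apply: "sum f A x = (\<Sum>a\<in>A. f a x)"
  by (induct A rule: infinite_finite_induct) auto

lemma app_sum_scale:
  "app R (\<lambda>k. \<Sum>c\<in>UNIV. v c * w c k) = (\<lambda>i. \<Sum>c\<in>UNIV. v c * app R (w c) i)"
  unfolding app_def fun_eq_iff sum_distrib_left sum_distrib_right
  by (intro allI, subst sum.swap) (simp add: mult_ac)

lemma app2_bpair:
  fixes A :: "'m::finite \<Rightarrow> 'l::finite \<Rightarrow> 'k::field" and B :: "'l \<Rightarrow> 'n::finite \<Rightarrow> 'k"
  shows "app2 A (app2 B p) i j = bpair p (\<lambda>c. \<Sum>a\<in>UNIV. A i a * B a c) (\<lambda>d. \<Sum>b\<in>UNIV. A j b * B b d)"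
proof -
  have "app2 A (app2 B p) i j = (\<Sum>a\<in>UNIV. \<Sum>b\<in>UNIV. \<Sum>c\<in>UNIV. \<Sum>d\<in>UNIV. p c d * (A i a * B a c) * (A j b * B b d))"
    unfolding app2_def by (simp add: sum_distrib_left mult_ac)
  also have "\<dots> = (\<Sum>a\<in>UNIV. \<Sum>c\<in>UNIV. \<Sum>b\<in>UNIV. \<Sum>d\<in>UNIV. p c d * (A i a * B a c) * (A j b * B b d))"
    by (rule sum.cong[OF refl], rule sum.swap)
  also have "\<dots> = (\<Sum>c\<in>UNIV. \<Sum>a\<in>UNIV. \<Sum>b\<in>UNIV. \<Sum>d\<in>UNIV. p c d * (A i a * B a c) * (A j b * B b d))"
    by (rule sum.swap)
  also have "\<dots> = (\<Sum>c\<in>UNIV. \<Sum>a\<in>UNIV. \<Sum>d\<in>UNIV. \<Sum>b\<in>UNIV. p c d * (A i a * B a c) * (A j b * B b d))"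
    by (rule sum.cong[OF refl], rule sum.cong[OF refl], rule sum.swap)
  also have "\<dots> = (\<Sum>c\<in>UNIV. \<Sum>d\<in>UNIV. \<Sum>a\<in>UNIV. \<Sum>b\<in>UNIV. p c d * (A i a * B a c) * (A j b * B b d))"
    by (rule sum.cong[OF refl], rule sum.swap)
  also have "\<dots> = bpair p (\<lambda>c. \<Sum>a\<in>UNIV. A i a * B a c) (\<lambda>d. \<Sum>b\<in>UNIV. A j b * B b d)"
    unfolding bpair_def by (simp add: sum_distrib_left sum_distrib_right mult_ac)
  finally show ?thesis .
qed
lemma app2_bpair1: "app2 A p i j = bpair p (A i) (A j)"
  unfolding app2_def bpair_def by (simp add: mult_ac)

theorem lemmaA2:
  fixes p :: "'n::finite \<Rightarrow> 'n \<Rightarrow> 'k::field"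
    and V1 V2 U :: "('n \<Rightarrow> 'k) set"
    and R1 :: "'m1::finite \<Rightarrow> 'n \<Rightarrow> 'k"
    and R2 :: "'m2::finite \<Rightarrow> 'n \<Rightarrow> 'k"
    and P :: "'m2 \<Rightarrow> 'm1 \<Rightarrow> 'k"
  assumes p: "p \<in> wedge2"
    and V1: "is_subspace V1" and V2: "is_subspace V2"
    and orth: "\<forall>\<xi>\<in>annih V1. \<forall>\<eta>\<in>annih V2. bpair p \<xi> \<eta> = 0"
    and R1: "is_quotient_map R1 V1" and R2: "is_quotient_map R2 V2"
    and U: "is_subspace U" and cois: "coisotropic U p"
    and iso: "bij_betw (app R1) U UNIV"
    and psi: "\<forall>u\<in>U. app P (app R1 u) = app R2 u"
  shows "app2 P (app2 R1 p) = - app2 R2 p"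
proof -
  interpret M: module "vsc :: 'k \<Rightarrow> ('n \<Rightarrow> 'k) \<Rightarrow> _" by (rule module_vsc)
  interpret T: module "tsc :: 'k \<Rightarrow> ('n \<Rightarrow> 'n \<Rightarrow> 'k) \<Rightarrow> _" by (rule module_tsc)
  have Us: "M.subspace U" using U unfolding is_subspace_def .
  define e :: "'n \<Rightarrow> 'n \<Rightarrow> 'k" where "e c = (\<lambda>j. if j = c then 1 else 0)" for c
  have "\<forall>c. \<exists>u\<in>U. app R1 u = app R1 (e c)"
    using iso unfolding bij_betw_def by (metis UNIV_I imageE)
  then obtain w where w: "\<And>c. w c \<in> U" "\<And>c. app R1 (w c) = app R1 (e c)" by metis
  have inj: "inj_on (app R1) U" using iso bij_betw_def by blast
  define qv where "qv v = (\<lambda>k. \<Sum>c\<in>UNIV. v c * w c k)" for v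
  define qt where "qt \<xi> = (\<lambda>c. \<Sum>k\<in>UNIV. \<xi> k * w c k)" for \<xi> :: "'n \<Rightarrow> 'k"
  have qvU: "qv v \<in> U" for v
  proof -
    have "qv v = (\<Sum>c\<in>UNIV. vsc (v c) (w c))"
      unfolding qv_def vsc_def by (auto simp: fun_eq_iff sum_fun_apply)
    moreover have "(\<Sum>c\<in>UNIV. vsc (v c) (w c)) \<in> U"
      by (rule M.subspace_sum[OF Us]) (use Us w in \<open>auto simp: M.subspace_def\<close>)
    ultimately show ?thesis by simp
  qed
  have R1e: "app R1 (e c) = (\<lambda>i. R1 i c)" for c
    unfolding app_def e_def by (auto simp: fun_eq_iff if_distrib cong: if_cong)
  have R1qv: "app R1 (qv v) = app R1 v" for v
    unfolding qv_def app_sum_scale w R1e by (auto simp: app_def fun_eq_iff mult.commute)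
  have U0: "0 \<in> U" using Us by (simp add: M.subspace_def)
  have R10: "app R1 0 = 0" by (simp add: app_def fun_eq_iff)
  have qvid: "qv u = u" if "u \<in> U" for u
    by (rule inj_onD[OF inj R1qv qvU that])
  have qv0: "qv v = 0" if "v \<in> V1" for v
  proof -
    have "app R1 v = 0" using R1 that unfolding is_quotient_map_def by blast
    then have "app R1 (qv v) = app R1 0" using R1qv[of v] R10 by simp
    then show ?thesis by (rule inj_onD[OF inj _ qvU U0])
  qed
  have pair_qt: "pair (qt \<xi>) v = pair \<xi> (qv v)" for \<xi> v
    unfolding pair_def qt_def qv_def sum_distrib_left sum_distrib_right
    by (subst sum.swap) (simp add: mult_ac)
  have qt_annih: "qt \<xi> \<in> annih V1" for \<xi>
    unfolding annih_def using pair_qt qv0 by (simp add: pair_def)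
  have row2: "R2 i \<in> annih V2" for i
  proof -
    have "pair (R2 i) v = 0" if "v \<in> V2" for v
    proof -
      have "app R2 v = 0" using R2 that unfolding is_quotient_map_def by blast
      then have "app R2 v i = 0" by simp
      then show ?thesis unfolding app_def pair_def .
    qed
    then show ?thesis unfolding annih_def by blast
  qed
  have coisf: "bpair p (\<lambda>i. \<xi> i - qt \<xi> i) (\<lambda>i. \<eta> i - qt \<eta> i) = 0" for \<xi> \<eta>
  proof -
    have kill: "pair (\<lambda>i. \<xi> i - qt \<xi> i) u = 0" if "u \<in> U" for \<xi> u
    proof -
      have "pair (\<lambda>i. \<xi> i - qt \<xi> i) u = pair \<xi> u - pair (qt \<xi>) u"
        unfolding pair_def by (simp add: algebra_simps sum_subtractf)
      then show ?thesis using pair_qt qvid that by simp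
    qed
    have bt: "bpair (tens u v) a b = pair a u * pair b v" for u v a b
      unfolding bpair_def tens_def pair_def sum_product by (simp add: mult_ac)
    have sp: "p \<in> T.span ({tens u v | u v. u \<in> U \<and> v \<in> UNIV} \<union> {tens v u | u v. u \<in> U \<and> v \<in> UNIV})"
      using cois unfolding coisotropic_def wedge_sub_def by blast
    show ?thesis
      using sp
    proof (induct rule: T.span_induct_alt)
      case base
      then show ?case by (simp add: bpair_def)
    next
      case (step c x y)
      have lin: "bpair (tsc c x + y) a b = c * bpair x a b + bpair y a b" for a b
        unfolding bpair_def tsc_def
        by (simp add: sum.distrib sum_distrib_left algebra_simps)
      have "bpair x (\<lambda>i. \<xi> i - qt \<xi> i) (\<lambda>i. \<eta> i - qt \<eta> i) = 0"
        using step(1) by (auto simp: bt kill)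
      then show ?case using step(2) lin[of "\<lambda>i. \<xi> i - qt \<xi> i" "\<lambda>i. \<eta> i - qt \<eta> i"]
        by (metis add.right_neutral mult_zero_right)
    qed
  qed
  have main: "bpair p (qt \<alpha>) (qt \<beta>) = - bpair p \<alpha> \<beta>" if "\<alpha> \<in> annih V2" "\<beta> \<in> annih V2" for \<alpha> \<beta>
  proof -
    have a: "bpair p (qt \<alpha>) \<beta> = 0" using orth qt_annih that by blast
    have b: "bpair p (qt \<beta>) \<alpha> = 0" using orth qt_annih that by blast
    then have b': "bpair p \<alpha> (qt \<beta>) = 0" using bpair_antisym[OF p] by (metis neg_equal_0_iff_equal)
    have "0 = bpair p \<alpha> \<beta> - bpair p \<alpha> (qt \<beta>) - (bpair p (qt \<alpha>) \<beta> - bpair p (qt \<alpha>) (qt \<beta>))"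
      using coisf[of \<alpha> \<beta>] by (simp add: bpair_minus1 bpair_minus2)
    then have "bpair p \<alpha> \<beta> + bpair p (qt \<alpha>) (qt \<beta>) = 0" using a b' by simp
    then show ?thesis by (simp add: eq_neg_iff_add_eq_0 add.commute)
  qed
  have PR1: "(\<Sum>a\<in>UNIV. P i a * R1 a c) = qt (R2 i) c" for i c
  proof -
    have "app P (app R1 (e c)) = app P (app R1 (w c))" using w by simp
    also have "\<dots> = app R2 (w c)" using psi w(1) by blast
    finally have "app P (app R1 (e c)) i = app R2 (w c) i" by simp
    then show ?thesis unfolding R1e qt_def by (simp add: app_def)
  qed
  show ?thesis
  proof (rule ext, rule ext)
    fix i j
    have "app2 P (app2 R1 p) i j = bpair p (qt (R2 i)) (qt (R2 j))"
      unfolding app2_bpair PR1 by (simp add: fun_eq_iff)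
    also have "\<dots> = - bpair p (R2 i) (R2 j)" using main row2 by blast
    also have "\<dots> = (- app2 R2 p) i j" by (simp add: app2_bpair1)
    finally show "app2 P (app2 R1 p) i j = (- app2 R2 p) i j" .
  qed
qed

end
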